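(* Let $a$ be an automatic sequence and $\alpha$ a letter such that the logarithmic density $\lim_{N\to\infty}\frac1{\log N}\sum_{n\le N}\frac1n\mathbf 1_{[a(n)=\alpha]}$ equals $0$. Then the density $\lim_{N\to\infty}\frac1N\sum_{n\le N}\mathbf 1_{[a(n)=\alpha]}$ exists and equals $0$.
   Context: A sequence $a$ on a finite alphabet is automatic if for some $k\ge2$ there is a finite set of states $Q$, a transition map $\delta:Q\times\{0,\dots,k-1\}\to Q$ extended to words letter by letter, an initial state $q_0$ and an output map $\tau$ with $a(n)=\tau(\delta(q_0,(n)_k))$, $(n)_k$ being the base-$k$ expansion of $n$ (most significant digit first). *)

theory Defs
  imports "HOL-Analysis.Analysis"
begin

fun base_digits :: "nat \<Rightarrow> nat \<Rightarrow> nat list" where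
  "base_digits k n = (if k < 2 \<or> n = 0 then [] else base_digits k (n div k) @ [n mod k])"

declare base_digits.simps [simp del]

text \<open>A sequence is automatic: there is k \<ge> 2 and a finite automaton with output
 (states drawn from a finite set Q of naturals, which is no loss of generality)
 reading the base-k expansion of n, most significant digit first.\<close>
definition automatic :: "(nat \<Rightarrow> 'b) \<Rightarrow> bool" where
  "automatic a \<longleftrightarrow> (\<exists>(k::nat) (Q::nat set) (\<delta>::nat \<Rightarrow> nat \<Rightarrow> nat) q0 (\<tau>::nat \<Rightarrow> 'b).
      k \<ge> 2 \<and> finite Q \<and> q0 \<in> Q \<and>
      (\<forall>q\<in>Q. \<forall>d<k. \<delta> q d \<in> Q) \<and>
      (\<forall>n. a n = \<tau> (foldl \<delta> q0 (base_digits k n))))"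

end

theory Submission
  imports Defs
begin

lemma uniform_bound:
  fixes P :: "'a \<Rightarrow> nat \<Rightarrow> bool"
  assumes "finite A" "\<forall>x\<in>A. \<exists>n. P x n" "\<And>x n m. P x n \<Longrightarrow> n \<le> m \<Longrightarrow> P x m"
  shows "\<exists>N. \<forall>x\<in>A. P x N"
  using assms(1,2)
proof (induction A rule: finite_induct)
  case empty then show ?case by auto
next
  case (insert x F)
  then obtain N1 where "\<forall>y\<in>F. P y N1" by auto
  moreover obtain N2 where "P x N2" using insert by auto
  ultimately have A: "\<And>y. y\<in>F \<Longrightarrow> P y (max N1 N2)" and B: "P x (max N1 N2)"
    using assms(3)[OF _ max.cobounded1] assms(3)[OF _ max.cobounded2] by auto
  then have "\<forall>y\<in>insert x F. P y (max N1 N2)" by auto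
  then show ?case by blast
qed

lemma digits_lt: "x \<in> set (base_digits k n) \<Longrightarrow> x < k"
proof (induction k n rule: base_digits.induct)
  case (1 k n)
  then show ?case
    by (subst (asm) base_digits.simps) (auto split: if_splits)
qed

locale aut =
  fixes k :: nat and Q :: "nat set" and \<delta> :: "nat \<Rightarrow> nat \<Rightarrow> nat" and q0 :: nat
    and \<tau> :: "nat \<Rightarrow> 'b" and \<alpha> :: 'b
  assumes k2: "k \<ge> 2" and finQ: "finite Q" and q0Q: "q0 \<in> Q"
    and closedQ: "\<And>q d. q \<in> Q \<Longrightarrow> d < k \<Longrightarrow> \<delta> q d \<in> Q"
begin

definition st :: "nat \<Rightarrow> nat" where "st n = foldl \<delta> q0 (base_digits k n)"

fun run :: "nat \<Rightarrow> nat \<Rightarrow> nat \<Rightarrow> nat" where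
  "run r 0 v = r"
| "run r (Suc l) v = \<delta> (run r l (v div k)) (v mod k)"

definition dead :: "nat \<Rightarrow> bool" where
  "dead r \<longleftrightarrow> (\<forall>l v. v < k^l \<longrightarrow> \<tau> (run r l v) \<noteq> \<alpha>)"

lemma foldl_Q: "q \<in> Q \<Longrightarrow> \<forall>x\<in>set xs. x < k \<Longrightarrow> foldl \<delta> q xs \<in> Q"
  by (induction xs arbitrary: q) (auto intro: closedQ)

lemma st_Q: "st n \<in> Q"
  unfolding st_def using foldl_Q q0Q digits_lt by blast

lemma st_step: assumes "n \<ge> 1" "d < k" shows "st (n*k+d) = \<delta> (st n) d"
proof -
  have "base_digits k (n*k+d) = base_digits k ((n*k+d) div k) @ [(n*k+d) mod k]"
    using k2 assms by (subst base_digits.simps) auto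
  also have "(n*k+d) div k = n" using assms k2 by auto
  also have "(n*k+d) mod k = d" using assms k2 by auto
  finally show ?thesis unfolding st_def by simp
qed

lemma run_Q: "r \<in> Q \<Longrightarrow> run r l v \<in> Q"
proof (induction l arbitrary: v)
  case (Suc l) then show ?case using k2 by (auto intro!: closedQ)
qed simp

lemma st_run: assumes "n \<ge> 1" "v < k^l" shows "st (n*k^l + v) = run (st n) l v"
  using assms(2)
proof (induction l arbitrary: v)
  case 0 then show ?case by simp
next
  case (Suc l)
  have e: "n*k^Suc l + v = (n*k^l + v div k)*k + v mod k"
    by (simp add: algebra_simps)
  have "v div k < k^l" using Suc.prems k2
    by (metis div_less_iff_less_mult mult.commute not_numeral_le_zero not_one_le_zero power_Suc zero_less_iff_neq_zero le_trans)
  moreover have "n*k^l + v div k \<ge> 1" using assms(1) k2 by (simp add: add_increasing2)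
  ultimately show ?case using e Suc st_step k2 by simp
qed

lemma run_concat: assumes "v2 < k^l2"
  shows "run r (l1+l2) (v1*k^l2+v2) = run (run r l1 v1) l2 v2"
  using assms
proof (induction l2 arbitrary: v2)
  case 0 then show ?case by simp
next
  case (Suc l2)
  have ee: "v1*k^Suc l2+v2 = v2 + (v1*k^l2)*k" by (simp add: algebra_simps)
  have d: "(v1*k^Suc l2+v2) div k = v1*k^l2 + v2 div k" using k2 unfolding ee
    by (simp add: div_mult_self2)
  have m: "(v1*k^Suc l2+v2) mod k = v2 mod k" using k2 unfolding ee by simp
  have "v2 div k < k^l2" using Suc.prems k2
    by (simp add: div_less_iff_less_mult mult.commute)
  then show ?case using d m Suc.IH by simp
qed

lemma concat_bound: assumes "v1 < k^l1" "v2 < k^l2" shows "v1*k^l2+v2 < k^(l1+l2)"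
proof -
  have "v1*k^l2+v2 < (v1+1)*k^l2" using assms by simp
  also have "\<dots> \<le> k^l1*k^l2" using assms by (intro mult_right_mono) auto
  finally show ?thesis by (simp add: power_add)
qed

lemma dead_run: assumes "dead r" "v < k^l" shows "dead (run r l v)"
  unfolding dead_def
proof (intro allI impI)
  fix l' v' assume "v' < k^l'"
  then show "\<tau> (run (run r l v) l' v') \<noteq> \<alpha>"
    using assms concat_bound run_concat unfolding dead_def by metis
qed

lemma dead_tau: "dead r \<Longrightarrow> \<tau> r \<noteq> \<alpha>"
  unfolding dead_def by (metis one_less_power run.simps(1) power_0 less_one zero_less_one)


lemma caseA:
  assumes A: "\<forall>m\<ge>1. \<exists>l v. v<k^l \<and> dead (run (st m) l v)"
  shows "(\<lambda>N. real (card {n\<in>{1..N}. \<tau> (st n) = \<alpha>}) / real N) \<longlonglongrightarrow> 0"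
proof -
  define P where "P r l \<longleftrightarrow> (\<exists>v<k^l. dead (run r l v))" for r l
  have mono: "P r m" if "P r n" "n \<le> m" for r n m
  proof -
    from that obtain v where v: "v<k^n" "dead (run r n v)" unfolding P_def by auto
    have kp: "0 < k^(m-n)" using k2 by simp
    have b: "v * k^(m-n)+0 < k^(n+(m-n))" using concat_bound[OF v(1) kp] .
    have e: "run r (n+(m-n)) (v * k^(m-n)+0) = run (run r n v) (m-n) 0" using run_concat kp by blast
    have "dead (run (run r n v) (m-n) 0)" using dead_run[OF v(2)] kp by blast
    then have "\<exists>w<k^(n+(m-n)). dead (run r (n+(m-n)) w)" using b e by metis
    then show ?thesis unfolding P_def using that(2) by simp
  qed
  have fin: "finite (st ` {1..})" using finite_subset[OF _ finQ] st_Q by blast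
  have ex: "\<forall>r\<in>st ` {1..}. \<exists>l. P r l" using A unfolding P_def by auto
  obtain D where D: "\<forall>r\<in>st ` {1..}. P r D"
    using uniform_bound[OF fin ex] mono by blast
  then have "\<forall>m. \<exists>v. m \<ge> 1 \<longrightarrow> v<k^D \<and> dead (run (st m) D v)" unfolding P_def by auto
  then obtain g where g: "\<And>m. m\<ge>1 \<Longrightarrow> g m < k^D \<and> dead (run (st m) D (g m))" by metis
  define K where "K = k^D"
  have K1: "K \<ge> 1" using k2 by (simp add: K_def)
  define LS where "LS N = {n\<in>{1..N}. \<not> dead (st n)}" for N
  define L where "L N = card (LS N)" for N
  have finLS: "finite (LS N)" for N unfolding LS_def by auto
  have rec: "L N \<le> K + (K-1) * L (N div K)" for N
  proof -
    define S where "S = (SIGMA m:LS (N div K). {..<K} - {g m})"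
    have sub: "LS N \<subseteq> {1..<K} \<union> (\<lambda>(m,v). m*K+v) ` S"
    proof
      fix n assume n: "n \<in> LS N"
      show "n \<in> {1..<K} \<union> (\<lambda>(m,v). m*K+v) ` S"
      proof (cases "n < K")
        case True then show ?thesis using n by (auto simp: LS_def)
      next
        case False
        define m where "m = n div K"
        define v where "v = n mod K"
        have nm: "n = m*K+v" by (simp add: m_def v_def)
        have m1: "m \<ge> 1" using False K1 by (simp add: m_def div_greater_zero_iff Suc_le_eq)
        have mN: "m \<le> N div K" using n by (auto simp: LS_def m_def div_le_mono)
        have vK: "v < K" using K1 by (simp add: v_def)
        have stn: "st n = run (st m) D v" using st_run[OF m1, of v D] vK nm K_def by simp
        have "\<not> dead (st m)" using dead_run[of "st m" v D] stn n vK K_def by (auto simp: LS_def)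
        moreover have "v \<noteq> g m" using g[OF m1] stn n by (auto simp: LS_def)
        ultimately have "(m,v) \<in> S" using m1 mN vK unfolding S_def LS_def by auto
        then show ?thesis using nm by force
      qed
    qed
    have finS: "finite S" unfolding S_def using finLS by auto
    have "L N \<le> card ({1..<K} \<union> (\<lambda>(m,v). m*K+v) ` S)"
      unfolding L_def by (rule card_mono) (use finS sub in auto)
    also have "\<dots> \<le> card {1..<K} + card ((\<lambda>(m,v). m*K+v) ` S)" by (rule card_Un_le)
    also have "card ((\<lambda>(m,v). m*K+v) ` S) \<le> card S" by (rule card_image_le[OF finS])
    also have "card S = (\<Sum>m\<in>LS (N div K). card ({..<K} - {g m}))"
      unfolding S_def by (rule card_SigmaI) (use finLS in auto)
    also have "\<dots> = (\<Sum>m\<in>LS (N div K). K - 1)"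
    proof (rule sum.cong)
      fix m assume "m \<in> LS (N div K)"
      then have "m \<ge> 1" by (auto simp: LS_def)
      then have "g m < K" using g K_def by auto
      then show "card ({..<K} - {g m}) = K - 1" by (simp add: card_Diff_singleton)
    qed simp
    also have "\<dots> = (K-1) * L (N div K)" by (simp add: L_def)
    finally show ?thesis by simp
  qed
  have bnd: "L N \<le> t*K^t + (K-1)^t * (N div K^t)" for t N
  proof (induction t arbitrary: N)
    case 0
    have "L N \<le> card {1..N}" unfolding L_def LS_def by (rule card_mono) auto
    then show ?case by simp
  next
    case (Suc t)
    have "L N \<le> K + (K-1)*L(N div K)" by (rule rec)
    also have "\<dots> \<le> K + (K-1)*(t*K^t + (K-1)^t*((N div K) div K^t))"
      using Suc.IH by (intro add_left_mono mult_left_mono) auto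
    also have "\<dots> = K + (K-1)*t*K^t + (K-1)^Suc t * (N div K^Suc t)"
    proof -
      have q: "(N div K) div K^t = N div K^Suc t" by (simp add: div_mult2_eq)
      have "\<And>x y::nat. K + x*(t*K^t + x^t*y) = K + x*t*K^t + x^Suc t*y"
        by (simp add: algebra_simps)
      then show ?thesis unfolding q by blast
    qed
    also have "K + (K-1)*t*K^t \<le> Suc t * K^Suc t"
    proof -
      have a: "K \<le> K*K^t" using K1 by simp
      have b: "(K-1)*t*K^t \<le> t*(K*K^t)" by (simp add: mult_le_mono)
      show ?thesis using add_le_mono[OF a b] by simp
    qed
    finally show ?case by simp
  qed
  have cnt: "card {n\<in>{1..N}. \<tau> (st n) = \<alpha>} \<le> L N" for N
    unfolding L_def LS_def
  proof (rule card_mono)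
    show "{n \<in> {1..N}. \<tau> (st n) = \<alpha>} \<subseteq> {n \<in> {1..N}. \<not> dead (st n)}"
    proof
      fix n assume "n \<in> {n \<in> {1..N}. \<tau> (st n) = \<alpha>}"
      then have "n \<in> {1..N}" "\<tau> (st n) = \<alpha>" by auto
      moreover from this(2) have "\<not> dead (st n)" using dead_tau by metis
      ultimately show "n \<in> {n \<in> {1..N}. \<not> dead (st n)}" by simp
    qed
  qed simp
  show ?thesis
  proof (rule LIMSEQ_I)
    fix r :: real assume r: "0 < r"
    define \<rho> where "\<rho> = real (K-1) / real K"
    have \<rho>0: "0 \<le> \<rho>" "\<rho> < 1" using K1 by (auto simp: \<rho>_def)
    obtain t where t: "\<rho>^t < r/2" using real_arch_pow_inv[of "r/2" \<rho>] \<rho>0 r by auto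
    define c where "c = real t * real K^t"
    have c0: "c \<ge> 0" by (simp add: c_def)
    obtain n0 :: nat where n0: "real n0 > 2*c/r" using reals_Archimedean2 by blast
    show "\<exists>no. \<forall>N\<ge>no. norm (real (card {n\<in>{1..N}. \<tau> (st n) = \<alpha>}) / real N - 0) < r"
    proof (intro exI allI impI)
      fix N assume N: "N \<ge> Suc n0"
      have Npos: "real N > 0" using N by simp
      have "real (card {n\<in>{1..N}. \<tau> (st n) = \<alpha>}) \<le> real (L N)" using cnt by simp
      also have "\<dots> \<le> c + real (K-1)^t * real (N div K^t)"
      proof -
        have "real (L N) \<le> real (t*K^t + (K-1)^t * (N div K^t))"
          using bnd[of N t] by (simp only: of_nat_le_iff)
        then show ?thesis by (simp add: c_def)
      qed
      also have "\<dots> \<le> c + real (K-1)^t * (real N / real K^t)"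
        by (intro add_left_mono mult_left_mono) (auto simp: of_nat_div_le_of_nat[of N "K^t", simplified])
      also have "\<dots> = c + \<rho>^t * real N" by (simp add: \<rho>_def power_divide)
      finally have le: "real (card {n\<in>{1..N}. \<tau> (st n) = \<alpha>}) \<le> c + \<rho>^t * real N" .
      have "c < r/2 * real N"
      proof -
        have "2*c/r < real N" using n0 N by linarith
        then show ?thesis using r by (simp add: field_simps)
      qed
      then have "real (card {n\<in>{1..N}. \<tau> (st n) = \<alpha>}) < r * real N"
      proof -
        have "\<rho>^t * real N < r/2 * real N" using t Npos by (rule mult_strict_right_mono)
        then show ?thesis using le \<open>c < r/2 * real N\<close> by linarith
      qed
      then show "norm (real (card {n\<in>{1..N}. \<tau> (st n) = \<alpha>}) / real N - 0) < r"
        using Npos by (simp add: divide_less_eq)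
    qed
  qed
qed


lemma divlem: "v < b \<Longrightarrow> (x*b + v) div b = (x::nat)"
  by simp

lemma caseB:
  assumes m0: "m0 \<ge> 1" and B: "\<forall>l v. v<k^l \<longrightarrow> \<not> dead (run (st m0) l v)"
  shows "\<not> (\<lambda>N. (\<Sum>n\<in>{1..N}. (if \<tau> (st n) = \<alpha> then 1 / real n else 0)) / ln (real N)) \<longlonglongrightarrow> 0"
proof
  assume lim0: "(\<lambda>N. (\<Sum>n\<in>{1..N}. (if \<tau> (st n) = \<alpha> then 1 / real n else 0)) / ln (real N)) \<longlonglongrightarrow> 0"
  define s where "s = st m0"
  define RS where "RS = {run s l v | l v. v < k^l}"
  have finRS: "finite RS"
    by (rule finite_subset[OF _ finQ]) (auto simp: RS_def s_def intro: run_Q st_Q)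
  define P where "P r D \<longleftrightarrow> (\<exists>l\<le>D. \<exists>v<k^l. \<tau> (run r l v) = \<alpha>)" for r D
  have ex: "\<forall>r\<in>RS. \<exists>D. P r D"
  proof
    fix r assume "r \<in> RS"
    then obtain l v where "v<k^l" "r = run s l v" by (auto simp: RS_def)
    then have "\<not> dead r" using B s_def by auto
    then show "\<exists>D. P r D" unfolding dead_def P_def by auto
  qed
  have mono: "P r m" if "P r n" "n \<le> m" for r n m
    using that unfolding P_def by (blast intro: le_trans)
  obtain D where D: "\<forall>r\<in>RS. P r D" using uniform_bound[OF finRS ex] mono by blast
  then have "\<forall>r. \<exists>lv. r\<in>RS \<longrightarrow> fst lv \<le> D \<and> snd lv < k^(fst lv) \<and> \<tau> (run r (fst lv) (snd lv)) = \<alpha>"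
    unfolding P_def by force
  then obtain h where h: "\<And>r. r\<in>RS \<Longrightarrow> fst (h r) \<le> D \<and> snd (h r) < k^(fst (h r)) \<and> \<tau> (run r (fst (h r)) (snd (h r))) = \<alpha>"
    by metis
  define lf where "lf r = fst (h r)" for r
  define vf where "vf r = snd (h r)" for r
  define f where "f n = (if \<tau> (st n) = \<alpha> then 1 / real n else 0)" for n
  have f0: "f n \<ge> 0" for n by (simp add: f_def)
  define G where "G M = (\<Sum>n\<in>{0..<M}. f n)" for M
  define NT where "NT T = m0 * k^(T*(D+1))" for T
  define c where "c = 1 / (real (m0+1) * real k^D)"
  have c0: "c > 0" using k2 by (simp add: c_def)
  have key: "(m0+1)*k^j \<le> m0*k^(Suc j)" for j
  proof -
    have "2*m0 \<le> m0*k" using k2 by simp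
    then have "m0+1 \<le> m0*k" using m0 by linarith
    then have "(m0+1)*k^j \<le> (m0*k)*k^j" by (rule mult_right_mono) simp
    then show ?thesis by (simp add: algebra_simps)
  qed
  have step: "G (NT (Suc T)) \<ge> G (NT T) + c" for T
  proof -
    define Lx where "Lx = T*(D+1)"
    define r where "r u = run s Lx u" for u
    define \<phi> where "\<phi> u = (m0*k^Lx+u)*k^(lf (r u)) + vf (r u)" for u
    have rRS: "r u \<in> RS" if "u<k^Lx" for u using that by (auto simp: r_def RS_def)
    have hu: "lf (r u) \<le> D" "vf (r u) < k^(lf (r u))" "\<tau> (run (r u) (lf (r u)) (vf (r u))) = \<alpha>"
      if "u<k^Lx" for u using h[OF rRS[OF that]] lf_def vf_def by auto
    have pos: "1 \<le> m0*k^Lx" using m0 k2 by (simp add: Suc_le_eq)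
    have pos2: "1 \<le> m0*k^Lx+u" for u using pos by linarith
    have f\<alpha>: "\<tau> (st (\<phi> u)) = \<alpha>" if u: "u<k^Lx" for u
    proof -
      have "st (\<phi> u) = run (st (m0*k^Lx+u)) (lf (r u)) (vf (r u))"
        unfolding \<phi>_def by (rule st_run[OF pos2 hu(2)[OF u]])
      also have "st (m0*k^Lx+u) = run s Lx u" unfolding s_def by (rule st_run[OF m0 u])
      finally show ?thesis using hu[OF u] r_def by simp
    qed
    have lo: "m0*k^(Lx + lf (r u)) \<le> \<phi> u" for u
    proof -
      have "m0*k^(Lx + lf (r u)) = (m0*k^Lx)*k^(lf (r u))" by (simp add: power_add algebra_simps)
      also have "\<dots> \<le> (m0*k^Lx+u)*k^(lf (r u))" by (rule mult_right_mono) auto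
      also have "\<dots> \<le> \<phi> u" by (simp add: \<phi>_def)
      finally show ?thesis .
    qed
    have hi: "\<phi> u < (m0+1)*k^(Lx + lf (r u))" if u: "u<k^Lx" for u
    proof -
      have "\<phi> u < (m0*k^Lx+u+1)*k^(lf (r u))" using hu(2)[OF u] by (simp add: \<phi>_def)
      also have "\<dots> \<le> (m0*k^Lx+k^Lx)*k^(lf (r u))" by (rule mult_right_mono) (use u in auto)
      also have "\<dots> = (m0+1)*k^(Lx + lf (r u))" by (simp add: power_add algebra_simps)
      finally show ?thesis .
    qed
    have sep: "lf (r u1) \<le> lf (r u2)" if "u1<k^Lx" "u2<k^Lx" "\<phi> u1 = \<phi> u2" for u1 u2
    proof (rule ccontr)
      assume "\<not> lf (r u1) \<le> lf (r u2)"
      then have le: "Suc (Lx + lf (r u2)) \<le> Lx + lf (r u1)" by simp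
      have "\<phi> u2 < (m0+1)*k^(Lx + lf (r u2))" by (rule hi[OF that(2)])
      also have "\<dots> \<le> m0*k^(Suc (Lx + lf (r u2)))" by (rule key)
      also have "\<dots> \<le> m0*k^(Lx + lf (r u1))"
        by (intro mult_left_mono power_increasing le) (use k2 in auto)
      also have "\<dots> \<le> \<phi> u1" by (rule lo)
      finally show False using that(3) by simp
    qed
    have inj: "inj_on \<phi> {..<k^Lx}"
    proof (rule inj_onI)
      fix u1 u2 assume u1: "u1 \<in> {..<k^Lx}" and u2: "u2 \<in> {..<k^Lx}" and eq: "\<phi> u1 = \<phi> u2"
      have l: "lf (r u1) = lf (r u2)" using sep[of u1 u2] sep[of u2 u1] u1 u2 eq by auto
      have d1: "\<phi> u1 div k^(lf (r u1)) = m0*k^Lx+u1"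
        unfolding \<phi>_def using hu(2)[of u1] u1 by (simp only: divlem lessThan_iff)
      have d2: "\<phi> u2 div k^(lf (r u2)) = m0*k^Lx+u2"
        unfolding \<phi>_def using hu(2)[of u2] u2 by (simp only: divlem lessThan_iff)
      have "m0*k^Lx+u1 = m0*k^Lx+u2" using d1 d2 unfolding l eq by (rule trans[OF sym])
      then show "u1 = u2" by simp
    qed
    have range: "\<phi> ` {..<k^Lx} \<subseteq> {NT T..<NT (Suc T)}"
    proof
      fix n assume "n \<in> \<phi> ` {..<k^Lx}"
      then obtain u where u: "u < k^Lx" and n: "n = \<phi> u" by auto
      have "NT T \<le> m0*k^(Lx + lf (r u))" unfolding NT_def Lx_def
        by (intro mult_left_mono power_increasing) (use k2 in auto)
      also have "\<dots> \<le> n" using lo n by simp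
      finally have 1: "NT T \<le> n" .
      have "n < (m0+1)*k^(Lx + lf (r u))" using hi[OF u] n by simp
      also have "\<dots> \<le> (m0+1)*k^(Lx + D)"
        by (intro mult_left_mono power_increasing) (use k2 hu(1)[OF u] in auto)
      also have "\<dots> \<le> m0*k^(Suc (Lx + D))" by (rule key)
      also have "\<dots> = NT (Suc T)" by (simp add: NT_def Lx_def algebra_simps)
      finally show "n \<in> {NT T..<NT (Suc T)}" using 1 by simp
    qed
    have f\<phi>: "f (\<phi> u) \<ge> c / real k^Lx" if u: "u<k^Lx" for u
    proof -
      have b0: "(m0+1)*k^(Lx + lf (r u)) \<le> (m0+1)*k^(Lx + D)"
        by (intro mult_left_mono power_increasing) (use k2 hu(1)[OF u] in auto)
      have b1: "\<phi> u \<le> (m0+1)*k^(Lx+D)" using hi[OF u] b0 by linarith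
      then have "real (\<phi> u) \<le> real ((m0+1)*k^(Lx+D))" by (simp only: of_nat_le_iff)
      then have a: "real (\<phi> u) \<le> real (m0+1) * real k^(Lx+D)" by (simp add: algebra_simps)
      have "1 \<le> m0*k^(Lx + lf (r u))" using m0 k2 by (simp add: Suc_le_eq)
      then have "\<phi> u > 0" using lo[of u] by linarith
      then have p: "real (\<phi> u) > 0" by simp
      have "c / real k^Lx = 1 / (real (m0+1) * real k^(Lx+D))"
        by (simp add: c_def power_add field_simps)
      also have "\<dots> \<le> 1 / real (\<phi> u)" using a p by (intro divide_left_mono) auto
      also have "\<dots> = f (\<phi> u)" using f\<alpha>[OF u] by (simp add: f_def)
      finally show ?thesis .
    qed
    have le0: "NT T \<le> NT (Suc T)" unfolding NT_def
      by (intro mult_left_mono power_increasing) (use k2 in auto)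
    have "G (NT (Suc T)) = G (NT T) + (\<Sum>n\<in>{NT T..<NT (Suc T)}. f n)"
      unfolding G_def by (rule sum.atLeastLessThan_concat[symmetric]) (use le0 in auto)
    moreover have "(\<Sum>n\<in>{NT T..<NT (Suc T)}. f n) \<ge> (\<Sum>n\<in>\<phi> ` {..<k^Lx}. f n)"
      by (rule sum_mono2) (use range f0 in auto)
    moreover have "(\<Sum>n\<in>\<phi> ` {..<k^Lx}. f n) = (\<Sum>u<k^Lx. f (\<phi> u))"
      by (rule sum.reindex_cong[OF inj refl]) simp
    moreover have "(\<Sum>u<k^Lx. f (\<phi> u)) \<ge> (\<Sum>u<k^Lx. c / real k^Lx)"
      by (rule sum_mono) (use f\<phi> in auto)
    moreover have "(\<Sum>u<k^Lx. c / real k^Lx) = c" using k2 by simp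
    ultimately show ?thesis by linarith
  qed
  have GT: "G (NT T) \<ge> real T * c" for T
  proof (induction T)
    case 0 then show ?case unfolding G_def using f0 by (simp add: sum_nonneg)
  next
    case (Suc T) then show ?case using step[of T] by (simp add: algebra_simps)
  qed
  have Gle: "G N \<le> (\<Sum>n\<in>{1..N}. f n)" for N
  proof -
    have "G N \<le> G (Suc N)" unfolding G_def using f0[of N] by simp
    also have "G (Suc N) = (\<Sum>n\<in>{0..N}. f n)" unfolding G_def
      by (simp add: atLeastLessThanSuc_atLeastAtMost)
    also have "\<dots> = f 0 + (\<Sum>n\<in>{Suc 0..N}. f n)" by (rule sum.atLeast_Suc_atMost) simp
    also have "\<dots> = (\<Sum>n\<in>{1..N}. f n)" by (simp add: f_def)
    finally show ?thesis .
  qed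
  define X where "X N = (\<Sum>n\<in>{1..N}. f n) / ln (real N)" for N
  have lim: "X \<longlonglongrightarrow> 0" using lim0 unfolding X_def f_def .
  define A where "A = ln (real m0) + real (D+1) * ln (real k)"
  have lnm0: "ln (real m0) \<ge> 0" using m0 by simp
  have lnk: "ln (real k) > 0" using k2 by simp
  have A0: "A > 0" unfolding A_def using lnm0 lnk by (simp add: add_nonneg_pos)
  define e where "e = c / A"
  have e0: "e > 0" using c0 A0 by (simp add: e_def)
  have lowb: "X (NT T) \<ge> e" if T: "T \<ge> 1" for T
  proof -
    have kpos: "real k > 0" using k2 by simp
    have lnNT: "ln (real (NT T)) = ln (real m0) + real (T*(D+1)) * ln (real k)"
      unfolding NT_def using m0 kpos by (simp add: ln_mult ln_realpow)
    have "T*(D+1) > 0" using T by simp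
    then have "real (T*(D+1)) > 0" by (simp only: of_nat_0_less_iff)
    then have "real (T*(D+1)) * ln (real k) > 0" using lnk by (rule mult_pos_pos)
    then have lnpos: "ln (real (NT T)) > 0" unfolding lnNT using lnm0 by linarith
    have "ln (real (NT T)) \<le> real T * A" unfolding lnNT A_def
    proof -
      have T1: "1 \<le> real T" using T by simp
      have "1 * ln (real m0) \<le> real T * ln (real m0)" by (rule mult_right_mono[OF T1 lnm0])
      then have "ln (real m0) \<le> real T * ln (real m0)" by simp
      then show "ln (real m0) + real (T*(D+1)) * ln (real k) \<le> real T * (ln (real m0) + real (D+1) * ln (real k))"
        by (simp add: algebra_simps)
    qed
    have TA: "real T * A > 0" using T A0 by simp
    have "e = (real T * c) / (real T * A)" using T by (simp add: e_def)
    also have "\<dots> \<le> (real T * c) / ln (real (NT T))"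
      by (rule divide_left_mono) (use \<open>ln (real (NT T)) \<le> real T * A\<close> lnpos TA c0 in auto)
    also have "\<dots> \<le> G (NT T) / ln (real (NT T))"
      by (rule divide_right_mono) (use GT lnpos in auto)
    also have "\<dots> \<le> X (NT T)" unfolding X_def
      by (rule divide_right_mono) (use Gle lnpos in auto)
    finally show ?thesis .
  qed
  have smono: "strict_mono NT"
  proof (rule strict_monoI_Suc)
    fix T
    have "k^(T*(D+1)) < k^(Suc T*(D+1))" by (rule power_strict_increasing) (use k2 in auto)
    then show "NT T < NT (Suc T)" unfolding NT_def using m0 by simp
  qed
  have "(X \<circ> NT) \<longlonglongrightarrow> 0" by (rule LIMSEQ_subseq_LIMSEQ[OF lim smono])
  then have "eventually (\<lambda>T. (X \<circ> NT) T < e) sequentially" using e0 by (rule order_tendstoD(2))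
  then obtain T0 where T0: "\<And>T. T \<ge> T0 \<Longrightarrow> X (NT T) < e" unfolding eventually_sequentially by auto
  have "X (NT (max T0 1)) < e" by (rule T0) simp
  moreover have "X (NT (max T0 1)) \<ge> e" by (rule lowb) simp
  ultimately show False by simp
qed

end

theorem lemma3p6:
  fixes a :: "nat \<Rightarrow> 'b" and \<alpha> :: 'b
  assumes "automatic a"
    and "(\<lambda>N. (\<Sum>n\<in>{1..N}. (if a n = \<alpha> then 1 / real n else 0)) / ln (real N))
           \<longlonglongrightarrow> 0"
  shows "(\<lambda>N. real (card {n\<in>{1..N}. a n = \<alpha>}) / real N) \<longlonglongrightarrow> 0"
proof -
  from assms(1) obtain k Q \<delta> q0 and \<tau> :: "nat \<Rightarrow> 'b" where h: "k \<ge> 2" "finite Q" "q0 \<in> Q"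
    "\<forall>q\<in>Q. \<forall>d<k. \<delta> q d \<in> Q" "\<forall>n. a n = \<tau> (foldl \<delta> q0 (base_digits k n))"
    unfolding automatic_def by blast
  interpret A: aut k Q \<delta> q0 \<tau> \<alpha> using h by unfold_locales auto
  have an: "a = (\<lambda>n. \<tau> (A.st n))" using h(5) A.st_def by auto
  show ?thesis
  proof (cases "\<exists>m0\<ge>1. \<forall>l v. v<k^l \<longrightarrow> \<not> A.dead (A.run (A.st m0) l v)")
    case True
    then obtain m0 where m0: "m0 \<ge> 1" "\<forall>l v. v<k^l \<longrightarrow> \<not> A.dead (A.run (A.st m0) l v)" by blast
    from A.caseB[OF m0] assms(2) show ?thesis unfolding an by simp
  next
    case False
    then have "\<forall>m\<ge>1. \<exists>l v. v<k^l \<and> A.dead (A.run (A.st m) l v)" by auto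
    from A.caseA[OF this] show ?thesis unfolding an .
  qed
qed

end
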